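(* For any poset $(P,\succ)$ with $|P|=n$ and width $w$, the expected weight of the randomly constructed ternary search tree for $(P,\succ)$ is $O(n(\log n+w))$; equivalently, the expected number of queries used by the randomized construction is $O(n(\log n+w))$.
   Context: A poset $(P,\succ)$ consists of a set $P$ and an irreflexive, transitive relation $\succ$; its width is the maximum size of a set of mutually incomparable elements ($x,y$ incomparable if neither $x\succ y$ nor $y\succ x$). A ternary search tree for a poset $(P,\succ)$ is an empty node if $P=\emptyset$; otherwise it consists of a root holding an element $x\in P$ and left, middle, and right subtrees that are ternary search trees for the restrictions of $\succ$ to $\{y: x\succ y\}$, $\{y\ne x: x,y \text{ incomparable}\}$, and $\{y: y\succ x\}$ respectively. The randomized construction picks the root element uniformly at random from $P$, queries the oracle to compare each of the other $n-1$ elements with it to form the three sets, and recurses on each set independently. The weight of an internal node is the total number of internal nodes in its three subtrees; the weight of the tree is the sum of the weights of all internal nodes (this equals the number of queries made by the construction). Logarithms are base $2$. *)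

theory Defs
  imports "HOL-Probability.Probability"
begin

datatype 'a ttree = Leaf | Node "'a ttree" 'a "'a ttree" "'a ttree"

fun internal_nodes :: "'a ttree \<Rightarrow> nat" where
  "internal_nodes Leaf = 0"
| "internal_nodes (Node l x m r) = internal_nodes l + internal_nodes m + internal_nodes r + 1"

fun tree_weight :: "'a ttree \<Rightarrow> nat" where
  "tree_weight Leaf = 0"
| "tree_weight (Node l x m r) =
     (internal_nodes l + internal_nodes m + internal_nodes r)
     + tree_weight l + tree_weight m + tree_weight r"

text \<open>A strict poset on the carrier P: the relation \<open>gt x y\<close> means x \<succ> y;
  irreflexive and transitive on P.\<close>
definition strict_poset_on :: "'a set \<Rightarrow> ('a \<Rightarrow> 'a \<Rightarrow> bool) \<Rightarrow> bool" where
  "strict_poset_on P gt \<longleftrightarrow>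
     (\<forall>x\<in>P. \<not> gt x x) \<and> (\<forall>x\<in>P. \<forall>y\<in>P. \<forall>z\<in>P. gt x y \<longrightarrow> gt y z \<longrightarrow> gt x z)"

definition incomparable :: "('a \<Rightarrow> 'a \<Rightarrow> bool) \<Rightarrow> 'a \<Rightarrow> 'a \<Rightarrow> bool" where
  "incomparable gt x y \<longleftrightarrow> \<not> gt x y \<and> \<not> gt y x"

definition antichain_in :: "'a set \<Rightarrow> ('a \<Rightarrow> 'a \<Rightarrow> bool) \<Rightarrow> 'a set \<Rightarrow> bool" where
  "antichain_in P gt A \<longleftrightarrow> A \<subseteq> P \<and> (\<forall>x\<in>A. \<forall>y\<in>A. x \<noteq> y \<longrightarrow> incomparable gt x y)"

definition poset_width :: "'a set \<Rightarrow> ('a \<Rightarrow> 'a \<Rightarrow> bool) \<Rightarrow> nat" where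
  "poset_width P gt = Max (card ` {A. antichain_in P gt A})"

text \<open>Randomized construction with a fuel parameter (the fuel only needs to be at
  least card P; every recursive call is on a set not containing the root).\<close>
fun random_tst_fuel :: "nat \<Rightarrow> ('a \<Rightarrow> 'a \<Rightarrow> bool) \<Rightarrow> 'a set \<Rightarrow> 'a ttree pmf" where
  "random_tst_fuel 0 gt P = return_pmf Leaf"
| "random_tst_fuel (Suc k) gt P =
     (if P = {} then return_pmf Leaf else
      do { x \<leftarrow> pmf_of_set P;
           l \<leftarrow> random_tst_fuel k gt {y\<in>P. gt x y};
           m \<leftarrow> random_tst_fuel k gt {y\<in>P. y \<noteq> x \<and> incomparable gt x y};
           r \<leftarrow> random_tst_fuel k gt {y\<in>P. gt y x};
           return_pmf (Node l x m r) })"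

definition random_tst :: "('a \<Rightarrow> 'a \<Rightarrow> bool) \<Rightarrow> 'a set \<Rightarrow> 'a ttree pmf" where
  "random_tst gt P = random_tst_fuel (card P) gt P"

end

theory Submission
  imports Defs
begin



lemma asym_gt:
  assumes "strict_poset_on P gt" "x \<in> P" "y \<in> P" "gt x y" shows "\<not> gt y x"
  using assms unfolding strict_poset_on_def by blast

lemma strict_poset_on_subset:
  "strict_poset_on P gt \<Longrightarrow> S \<subseteq> P \<Longrightarrow> strict_poset_on S gt"
  unfolding strict_poset_on_def by blast

lemma antichains_finite:
  "finite S \<Longrightarrow> finite {A. antichain_in S gt A}"
  by (rule finite_subset[of _ "Pow S"]) (auto simp: antichain_in_def)

lemma width_ge:
  assumes "finite S" "antichain_in S gt A" shows "card A \<le> poset_width S gt"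
  unfolding poset_width_def using assms antichains_finite[OF assms(1)]
  by (intro Max_ge) auto

lemma width_ex:
  assumes "finite S" shows "\<exists>A. antichain_in S gt A \<and> card A = poset_width S gt"
proof -
  have ne: "{A. antichain_in S gt A} \<noteq> {}"
  proof -
    have "{} \<in> {A. antichain_in S gt A}" by (simp add: antichain_in_def)
    then show ?thesis by blast
  qed
  have "poset_width S gt \<in> card ` {A. antichain_in S gt A}"
    unfolding poset_width_def using antichains_finite[OF assms] ne by (intro Max_in) auto
  then show ?thesis by auto
qed

lemma width_mono:
  assumes "finite S" "T \<subseteq> S" shows "poset_width T gt \<le> poset_width S gt"
proof -
  obtain A where A: "antichain_in T gt A" "card A = poset_width T gt"
    using width_ex[OF finite_subset[OF assms(2,1)]] by blast
  then have "antichain_in S gt A" using assms unfolding antichain_in_def by auto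
  then show ?thesis using width_ge[OF assms(1), of gt A] A by simp
qed

lemma width_mid:
  assumes "finite S" "x \<in> S"
  shows "poset_width {u\<in>S. u \<noteq> x \<and> incomparable gt x u} gt + 1 \<le> poset_width S gt"
proof -
  let ?M = "{u\<in>S. u \<noteq> x \<and> incomparable gt x u}"
  obtain A where A: "antichain_in ?M gt A" "card A = poset_width ?M gt"
    using width_ex[of ?M gt] assms by auto
  have fA: "finite A" using A(1) assms unfolding antichain_in_def by (auto intro: finite_subset)
  have xA: "x \<notin> A" using A(1) unfolding antichain_in_def by auto
  have "antichain_in S gt (insert x A)"
    using A(1) assms unfolding antichain_in_def incomparable_def by auto
  then have "card (insert x A) \<le> poset_width S gt" using width_ge assms by blast
  then show ?thesis using A fA xA by simp
qed

lemma pair_count: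
  assumes "finite A" and asym: "\<And>a b. a \<in> A \<Longrightarrow> b \<in> A \<Longrightarrow> r a b \<Longrightarrow> \<not> r b a"
    and irr: "\<And>a. a \<in> A \<Longrightarrow> \<not> r a a"
  shows "2 * (\<Sum>x\<in>A. card {u\<in>A. r x u}) \<le> card A * card A - card A"
proof -
  let ?X = "{p\<in>A\<times>A. r (fst p) (snd p)}"
  let ?Y = "{p\<in>A\<times>A. r (snd p) (fst p)}"
  have s1: "(\<Sum>x\<in>A. card {u\<in>A. r x u}) = card ?X"
  proof -
    have "?X = Sigma A (\<lambda>x. {u\<in>A. r x u})" by auto
    then show ?thesis using assms(1) by (simp add: card_SigmaI)
  qed
  have s2: "card ?Y = card ?X"
    by (rule bij_betw_same_card[of "\<lambda>(a,b). (b,a)"]) (auto simp: bij_betw_def inj_on_def image_def)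
  have fin: "finite (A \<times> A)" using assms(1) by simp
  have "?X \<union> ?Y \<subseteq> A \<times> A - Id_on A" using irr by (auto simp: Id_on_def)
  then have "card (?X \<union> ?Y) \<le> card (A \<times> A - Id_on A)"
    by (intro card_mono) (use fin in auto)
  also have "\<dots> = card A * card A - card A"
  proof -
    have "Id_on A \<subseteq> A \<times> A" by auto
    moreover have "card (Id_on A) = card A"
    proof -
      have "Id_on A = (\<lambda>x. (x,x)) ` A" by auto
      then show ?thesis by (simp add: card_image inj_on_def)
    qed
    ultimately show ?thesis using fin by (simp add: card_Diff_subset finite_subset card_cartesian_product)
  qed
  finally have "card (?X \<union> ?Y) \<le> card A * card A - card A" .
  moreover have "card (?X \<union> ?Y) = card ?X + card ?Y"
  proof (rule card_Un_disjoint)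
    show "finite ?X" by (rule finite_subset[OF _ fin]) blast
    show "finite ?Y" by (rule finite_subset[OF _ fin]) blast
    show "?X \<inter> ?Y = {}"
    proof (rule equals0I)
      fix p assume "p \<in> ?X \<inter> ?Y"
      then obtain a b where "p = (a, b)" "a \<in> A" "b \<in> A" "r a b" "r b a" by (cases p) auto
      then show False using asym[of a b] by blast
    qed
  qed
  ultimately show ?thesis unfolding s1 using s2 by linarith
qed




lemma ln_tangent: assumes "m > 0" "(t::real) > 0" shows "ln t \<le> ln m + t / m - 1"
proof -
  have "ln (t/m) \<le> t/m - 1" using assms by (intro ln_le_minus_one) auto
  moreover have "ln (t/m) = ln t - ln m" using assms by (simp add: ln_div)
  ultimately show ?thesis by simp
qed

lemma log_sum:
  fixes a :: "'a \<Rightarrow> nat"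
  assumes "finite A" "2 * (\<Sum>x\<in>A. a x) \<le> card A * card A - card A"
  shows "(\<Sum>x\<in>A. log 2 (real (a x) + 1)) \<le> real (card A) * (log 2 (real (card A) + 1) - 1)"
proof (cases "card A = 0")
  case True
  then have "A = {}" using assms(1) by simp
  then show ?thesis by simp
next
  case False
  define k where "k = real (card A)"
  define m where "m = (k + 1) / 2"
  have kpos: "k \<ge> 1" using False k_def by simp
  have mpos: "m > 0" unfolding m_def using kpos by simp
  have sa: "2 * (\<Sum>x\<in>A. real (a x)) \<le> k * k - k"
  proof -
    have "real (2 * (\<Sum>x\<in>A. a x)) \<le> real (card A * card A - card A)" using assms(2) by linarith
    moreover have "card A \<le> card A * card A" by simp
    ultimately show ?thesis unfolding k_def by (simp add: of_nat_diff)
  qed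
  have "(\<Sum>x\<in>A. ln (real (a x) + 1)) \<le> (\<Sum>x\<in>A. ln m + (real (a x) + 1) / m - 1)"
    by (intro sum_mono ln_tangent mpos) auto
  also have "\<dots> = k * ln m + ((\<Sum>x\<in>A. real (a x)) + k) / m - k"
  proof -
    have "(\<Sum>x\<in>A. ln m + (real (a x) + 1) / m - 1) = (\<Sum>x\<in>A. ln m - 1) + (\<Sum>x\<in>A. (real (a x) + 1) / m)"
      by (subst sum.distrib[symmetric]) (simp add: algebra_simps)
    also have "(\<Sum>x\<in>A. (real (a x) + 1) / m) = (\<Sum>x\<in>A. (real (a x) + 1)) / m"
      by (simp add: sum_divide_distrib)
    also have "(\<Sum>x\<in>A. (real (a x) + 1)) = (\<Sum>x\<in>A. real (a x)) + k"
      by (simp add: sum.distrib k_def)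
    finally show ?thesis by (simp add: k_def algebra_simps)
  qed
  also have "((\<Sum>x\<in>A. real (a x)) + k) / m \<le> k"
  proof -
    have "(\<Sum>x\<in>A. real (a x)) + k \<le> k * m" using sa unfolding m_def by (simp add: field_simps)
    then show ?thesis using mpos by (simp add: divide_le_eq)
  qed
  finally have L: "(\<Sum>x\<in>A. ln (real (a x) + 1)) \<le> k * ln m" by simp
  have "(\<Sum>x\<in>A. log 2 (real (a x) + 1)) = (\<Sum>x\<in>A. ln (real (a x) + 1)) / ln 2"
    by (simp add: log_def sum_divide_distrib)
  also have "\<dots> \<le> k * ln m / ln 2" using L by (simp add: divide_right_mono)
  also have "k * ln m / ln 2 = k * log 2 m" by (simp add: log_def)
  also have "log 2 m = log 2 (k + 1) - 1" unfolding m_def using kpos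
    by (simp add: log_divide)
  finally show ?thesis unfolding k_def by simp
qed




definition gfun :: "('a \<Rightarrow> 'a \<Rightarrow> bool) \<Rightarrow> 'a set \<Rightarrow> 'a \<Rightarrow> real" where
  "gfun gt S y = log 2 (real (card {u\<in>S. gt u y}) + 1) + log 2 (real (card {u\<in>S. gt y u}) + 1)
     + real (poset_width S gt)"

definition child :: "('a \<Rightarrow> 'a \<Rightarrow> bool) \<Rightarrow> 'a set \<Rightarrow> 'a \<Rightarrow> 'a \<Rightarrow> 'a set" where
  "child gt S x y = (if gt x y then {u\<in>S. gt x u} else if gt y x then {u\<in>S. gt u x}
     else {u\<in>S. u \<noteq> x \<and> incomparable gt x u})"

lemma log_mono_nat: "a \<le> b \<Longrightarrow> log 2 (real a + 1) \<le> log 2 (real b + 1)"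
  by simp

lemma gfun_nonneg: "gfun gt S y \<ge> 0"
  unfolding gfun_def by simp

lemma per_y:
  assumes po: "strict_poset_on S gt" and fin: "finite S" and yS: "y \<in> S"
  shows "(\<Sum>x\<in>S-{y}. 1 + gfun gt (child gt S x y) y) \<le> real (card (S - {y})) * gfun gt S y"
proof -
  define U where "U = {u\<in>S. gt u y}"
  define D where "D = {u\<in>S. gt y u}"
  define I where "I = {u\<in>S. u \<noteq> y \<and> incomparable gt u y}"
  define w where "w = poset_width S gt"
  have irr: "\<And>a. a \<in> S \<Longrightarrow> \<not> gt a a" using po unfolding strict_poset_on_def by blast
  have tr: "\<And>a b c. a \<in> S \<Longrightarrow> b \<in> S \<Longrightarrow> c \<in> S \<Longrightarrow> gt a b \<Longrightarrow> gt b c \<Longrightarrow> gt a c"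
    using po unfolding strict_poset_on_def by blast
  have asy: "\<not> gt b a" if "a \<in> S" "b \<in> S" "gt a b" for a b
  proof
    assume "gt b a"
    then have "gt a a" using tr[OF that(1,2,1) that(3)] by blast
    then show False using irr[OF that(1)] by blast
  qed
  have fU: "finite U" "finite D" "finite I" using fin by (auto simp: U_def D_def I_def)
  have gS: "gfun gt S y = log 2 (real (card U) + 1) + log 2 (real (card D) + 1) + real w"
    by (simp add: gfun_def U_def D_def w_def)
  have split: "S - {y} = U \<union> D \<union> I" using irr[OF yS] yS
    by (auto simp: U_def D_def I_def incomparable_def)
  have disj: "U \<inter> D = {}" "(U \<union> D) \<inter> I = {}" using asy[OF _ yS] yS
    by (auto simp: U_def D_def I_def incomparable_def)
  have pU: "(\<Sum>x\<in>U. 1 + gfun gt (child gt S x y) y) \<le> real (card U) * gfun gt S y"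
  proof -
    define a where "a x = card {u\<in>U. gt x u}" for x
    have step: "1 + gfun gt (child gt S x y) y \<le> 1 + log 2 (real (a x) + 1) + log 2 (real (card D) + 1) + real w"
      if xU: "x \<in> U" for x
    proof -
      have gxy: "gt x y" and xS: "x \<in> S" using xU by (auto simp: U_def)
      have ch: "child gt S x y = {u\<in>S. gt x u}" using gxy by (simp add: child_def)
      have e1: "{u\<in>{u\<in>S. gt x u}. gt u y} = {u\<in>U. gt x u}" by (auto simp: U_def)
      have e2: "{u\<in>{u\<in>S. gt x u}. gt y u} = D" unfolding D_def using tr[OF xS yS _ gxy] by blast
      have e3: "poset_width {u\<in>S. gt x u} gt \<le> w" unfolding w_def by (rule width_mono[OF fin]) auto
      show ?thesis unfolding ch gfun_def e1 e2 a_def using e3 by simp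
    qed
    have pc: "2 * (\<Sum>x\<in>U. a x) \<le> card U * card U - card U"
      unfolding a_def by (rule pair_count[OF fU(1)]) (use asy irr in \<open>auto simp: U_def\<close>)
    have "(\<Sum>x\<in>U. 1 + gfun gt (child gt S x y) y)
        \<le> (\<Sum>x\<in>U. (1 + log 2 (real (card D) + 1) + real w) + log 2 (real (a x) + 1))"
      by (rule sum_mono) (use step in \<open>auto simp: algebra_simps\<close>)
    also have "\<dots> = real (card U) * (1 + log 2 (real (card D) + 1) + real w) + (\<Sum>x\<in>U. log 2 (real (a x) + 1))"
      by (simp add: sum.distrib)
    also have "\<dots> \<le> real (card U) * (1 + log 2 (real (card D) + 1) + real w) + real (card U) * (log 2 (real (card U) + 1) - 1)"
      using log_sum[OF fU(1) pc] by simp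
    also have "\<dots> = real (card U) * gfun gt S y" unfolding gS by (simp add: algebra_simps)
    finally show ?thesis .
  qed
  have pD: "(\<Sum>x\<in>D. 1 + gfun gt (child gt S x y) y) \<le> real (card D) * gfun gt S y"
  proof -
    define a where "a x = card {u\<in>D. gt u x}" for x
    have step: "1 + gfun gt (child gt S x y) y \<le> 1 + log 2 (real (card U) + 1) + log 2 (real (a x) + 1) + real w"
      if xD: "x \<in> D" for x
    proof -
      have gxy: "gt y x" and xS: "x \<in> S" using xD by (auto simp: D_def)
      have ngxy: "\<not> gt x y" using asy gxy xS yS by blast
      have ch: "child gt S x y = {u\<in>S. gt u x}" using gxy ngxy by (simp add: child_def)
      have e1: "{u\<in>{u\<in>S. gt u x}. gt u y} = U" unfolding U_def using tr[OF _ yS xS _ gxy] by blast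
      have e2: "{u\<in>{u\<in>S. gt u x}. gt y u} = {u\<in>D. gt u x}" by (auto simp: D_def)
      have e3: "poset_width {u\<in>S. gt u x} gt \<le> w" unfolding w_def by (rule width_mono[OF fin]) auto
      show ?thesis unfolding ch gfun_def e1 e2 a_def using e3 by simp
    qed
    have pc: "2 * (\<Sum>x\<in>D. a x) \<le> card D * card D - card D"
      unfolding a_def by (rule pair_count[OF fU(2), where r="\<lambda>x u. gt u x"]) (use asy irr in \<open>auto simp: D_def\<close>)
    have "(\<Sum>x\<in>D. 1 + gfun gt (child gt S x y) y)
        \<le> (\<Sum>x\<in>D. (1 + log 2 (real (card U) + 1) + real w) + log 2 (real (a x) + 1))"
      by (rule sum_mono) (use step in \<open>auto simp: algebra_simps\<close>)
    also have "\<dots> = real (card D) * (1 + log 2 (real (card U) + 1) + real w) + (\<Sum>x\<in>D. log 2 (real (a x) + 1))"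
      by (simp add: sum.distrib)
    also have "\<dots> \<le> real (card D) * (1 + log 2 (real (card U) + 1) + real w) + real (card D) * (log 2 (real (card D) + 1) - 1)"
      using log_sum[OF fU(2) pc] by simp
    also have "\<dots> = real (card D) * gfun gt S y" unfolding gS by (simp add: algebra_simps)
    finally show ?thesis .
  qed
  have pI: "(\<Sum>x\<in>I. 1 + gfun gt (child gt S x y) y) \<le> real (card I) * gfun gt S y"
  proof -
    have "1 + gfun gt (child gt S x y) y \<le> gfun gt S y" if xI: "x \<in> I" for x
    proof -
      have xS: "x \<in> S" and n1: "\<not> gt x y" and n2: "\<not> gt y x"
        using xI by (auto simp: I_def incomparable_def)
      let ?M = "{u\<in>S. u \<noteq> x \<and> incomparable gt x u}"
      have ch: "child gt S x y = ?M" using n1 n2 by (simp add: child_def)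
      have c1: "card {u\<in>?M. gt u y} \<le> card U" unfolding U_def by (rule card_mono) (use fin in auto)
      have c2: "card {u\<in>?M. gt y u} \<le> card D" unfolding D_def by (rule card_mono) (use fin in auto)
      have c3: "poset_width ?M gt + 1 \<le> w" unfolding w_def by (rule width_mid[OF fin xS])
      have gM: "gfun gt ?M y = log 2 (real (card {u\<in>?M. gt u y}) + 1) + log 2 (real (card {u\<in>?M. gt y u}) + 1) + real (poset_width ?M gt)"
        by (simp only: gfun_def)
      have c3': "real (poset_width ?M gt) + 1 \<le> real w" using c3 by linarith
      show ?thesis unfolding ch gM gS using log_mono_nat[OF c1] log_mono_nat[OF c2] c3' by linarith
    qed
    then have "(\<Sum>x\<in>I. 1 + gfun gt (child gt S x y) y) \<le> (\<Sum>x\<in>I. gfun gt S y)"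
      by (rule sum_mono)
    then show ?thesis by simp
  qed
  have "(\<Sum>x\<in>S-{y}. 1 + gfun gt (child gt S x y) y) =
      (\<Sum>x\<in>U. 1 + gfun gt (child gt S x y) y) + (\<Sum>x\<in>D. 1 + gfun gt (child gt S x y) y)
      + (\<Sum>x\<in>I. 1 + gfun gt (child gt S x y) y)"
    unfolding split
    by (simp only: sum.union_disjoint[OF _ fU(3) disj(2)] sum.union_disjoint[OF fU(1) fU(2) disj(1)] finite_UnI fU)
  also have "\<dots> \<le> real (card U) * gfun gt S y + real (card D) * gfun gt S y + real (card I) * gfun gt S y"
    using pU pD pI by linarith
  also have "\<dots> = real (card (S - {y})) * gfun gt S y"
    unfolding split
    by (simp only: card_Un_disjoint[OF _ fU(3) disj(2)] card_Un_disjoint[OF fU(1) fU(2) disj(1)] finite_UnI fU of_nat_add distrib_right)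
  finally show ?thesis .
qed




lemma parts:
  assumes po: "strict_poset_on S gt" and xS: "x \<in> S"
  shows "{u\<in>S. gt x u} \<union> {u\<in>S. u \<noteq> x \<and> incomparable gt x u} \<union> {u\<in>S. gt u x} = S - {x}"
    and "{u\<in>S. gt x u} \<inter> {u\<in>S. u \<noteq> x \<and> incomparable gt x u} = {}"
    and "({u\<in>S. gt x u} \<union> {u\<in>S. u \<noteq> x \<and> incomparable gt x u}) \<inter> {u\<in>S. gt u x} = {}"
proof -
  have irr: "\<And>a. a \<in> S \<Longrightarrow> \<not> gt a a" using po unfolding strict_poset_on_def by blast
  have tr: "\<And>a b c. a \<in> S \<Longrightarrow> b \<in> S \<Longrightarrow> c \<in> S \<Longrightarrow> gt a b \<Longrightarrow> gt b c \<Longrightarrow> gt a c"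
    using po unfolding strict_poset_on_def by blast
  show "{u\<in>S. gt x u} \<union> {u\<in>S. u \<noteq> x \<and> incomparable gt x u} \<union> {u\<in>S. gt u x} = S - {x}"
    using irr xS by (auto simp: incomparable_def)
  show "{u\<in>S. gt x u} \<inter> {u\<in>S. u \<noteq> x \<and> incomparable gt x u} = {}"
    by (auto simp: incomparable_def)
  show "({u\<in>S. gt x u} \<union> {u\<in>S. u \<noteq> x \<and> incomparable gt x u}) \<inter> {u\<in>S. gt u x} = {}"
  proof -
    have asy: "\<And>b. b \<in> S \<Longrightarrow> gt x b \<Longrightarrow> \<not> gt b x" using irr tr[OF xS _ xS] xS by blast
    then show ?thesis by (auto simp: incomparable_def)
  qed
qed

lemma card_parts:
  assumes po: "strict_poset_on S gt" and fin: "finite S" and xS: "x \<in> S"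
  shows "card {u\<in>S. gt x u} + card {u\<in>S. u \<noteq> x \<and> incomparable gt x u} + card {u\<in>S. gt u x} = card S - 1"
proof -
  have "card S - 1 = card (S - {x})" using xS fin by simp
  also have "\<dots> = card ({u\<in>S. gt x u} \<union> {u\<in>S. u \<noteq> x \<and> incomparable gt x u} \<union> {u\<in>S. gt u x})"
    using parts(1)[OF po xS] by simp
  also have "\<dots> = card {u\<in>S. gt x u} + card {u\<in>S. u \<noteq> x \<and> incomparable gt x u} + card {u\<in>S. gt u x}"
    using parts(2,3)[OF po xS] fin by (simp add: card_Un_disjoint)
  finally show ?thesis by simp
qed

lemma F_rewrite:
  assumes po: "strict_poset_on S gt" and fin: "finite S" and xS: "x \<in> S"
  shows "real (card S - 1) + (\<Sum>y\<in>{u\<in>S. gt x u}. gfun gt {u\<in>S. gt x u} y)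
     + (\<Sum>y\<in>{u\<in>S. u \<noteq> x \<and> incomparable gt x u}. gfun gt {u\<in>S. u \<noteq> x \<and> incomparable gt x u} y)
     + (\<Sum>y\<in>{u\<in>S. gt u x}. gfun gt {u\<in>S. gt u x} y)
     = (\<Sum>y\<in>S-{x}. 1 + gfun gt (child gt S x y) y)"
proof -
  let ?L = "{u\<in>S. gt x u}" and ?M = "{u\<in>S. u \<noteq> x \<and> incomparable gt x u}" and ?R = "{u\<in>S. gt u x}"
  have irr: "\<And>a. a \<in> S \<Longrightarrow> \<not> gt a a" using po unfolding strict_poset_on_def by blast
  have tr: "\<And>a b c. a \<in> S \<Longrightarrow> b \<in> S \<Longrightarrow> c \<in> S \<Longrightarrow> gt a b \<Longrightarrow> gt b c \<Longrightarrow> gt a c"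
    using po unfolding strict_poset_on_def by blast
  have c1: "(\<Sum>y\<in>?L. gfun gt ?L y) = (\<Sum>y\<in>?L. gfun gt (child gt S x y) y)"
    by (rule sum.cong) (auto simp: child_def)
  have c2: "(\<Sum>y\<in>?M. gfun gt ?M y) = (\<Sum>y\<in>?M. gfun gt (child gt S x y) y)"
    by (rule sum.cong) (auto simp: child_def incomparable_def)
  have c3: "(\<Sum>y\<in>?R. gfun gt ?R y) = (\<Sum>y\<in>?R. gfun gt (child gt S x y) y)"
  proof (rule sum.cong)
    fix y assume "y \<in> ?R"
    then have yS: "y \<in> S" and "gt y x" by auto
    then have "\<not> gt x y" using irr tr[OF xS _ xS] xS by blast
    note this \<open>gt y x\<close>
    then show "gfun gt ?R y = gfun gt (child gt S x y) y" by (simp add: child_def)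
  qed simp
  have fL: "finite ?L" "finite ?M" "finite ?R" using fin by auto
  have "(\<Sum>y\<in>S-{x}. gfun gt (child gt S x y) y) = (\<Sum>y\<in>?L. gfun gt (child gt S x y) y)
     + (\<Sum>y\<in>?M. gfun gt (child gt S x y) y) + (\<Sum>y\<in>?R. gfun gt (child gt S x y) y)"
    unfolding parts(1)[OF po xS, symmetric] using parts(2,3)[OF po xS] fL
    by (simp add: sum.union_disjoint)
  moreover have "(\<Sum>y\<in>S-{x}. 1 + gfun gt (child gt S x y) y) = real (card S - 1) + (\<Sum>y\<in>S-{x}. gfun gt (child gt S x y) y)"
    using xS fin by (simp add: sum.distrib)
  ultimately show ?thesis unfolding c1 c2 c3 by linarith
qed

lemma total_bound:
  assumes po: "strict_poset_on S gt" and fin: "finite S"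
  shows "(\<Sum>x\<in>S. \<Sum>y\<in>S-{x}. 1 + gfun gt (child gt S x y) y) \<le> real (card S) * (\<Sum>y\<in>S. gfun gt S y)"
proof -
  have "(\<Sum>x\<in>S. \<Sum>y\<in>S-{x}. 1 + gfun gt (child gt S x y) y)
      = (\<Sum>x\<in>S. \<Sum>y\<in>{y\<in>S. x \<noteq> y}. 1 + gfun gt (child gt S x y) y)"
    by (intro sum.cong) auto
  also have "\<dots> = (\<Sum>y\<in>S. \<Sum>x\<in>{x\<in>S. x \<noteq> y}. 1 + gfun gt (child gt S x y) y)"
    by (rule sum.swap_restrict[OF fin fin])
  also have "\<dots> = (\<Sum>y\<in>S. \<Sum>x\<in>S-{y}. 1 + gfun gt (child gt S x y) y)"
    by (intro sum.cong) auto
  also have "\<dots> \<le> (\<Sum>y\<in>S. real (card (S - {y})) * gfun gt S y)"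
    by (intro sum_mono per_y[OF po fin])
  also have "\<dots> \<le> (\<Sum>y\<in>S. real (card S) * gfun gt S y)"
    by (intro sum_mono mult_right_mono gfun_nonneg) (use fin in \<open>auto intro: card_mono\<close>)
  also have "\<dots> = real (card S) * (\<Sum>y\<in>S. gfun gt S y)" by (simp add: sum_distrib_left)
  finally show ?thesis .
qed




lemma nn_step:
  fixes p :: "'b pmf" and h f :: "'b \<Rightarrow> ennreal"
  assumes "\<And>x. x \<in> set_pmf p \<Longrightarrow> h x \<le> c + f x" "(\<integral>\<^sup>+x. f x \<partial>measure_pmf p) \<le> a"
  shows "(\<integral>\<^sup>+x. h x \<partial>measure_pmf p) \<le> c + a"
proof -
  have "(\<integral>\<^sup>+x. h x \<partial>measure_pmf p) \<le> (\<integral>\<^sup>+x. c + f x \<partial>measure_pmf p)"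
    by (rule nn_integral_mono_AE) (use assms(1) in \<open>auto simp: AE_measure_pmf_iff\<close>)
  also have "\<dots> = (\<integral>\<^sup>+x. c \<partial>measure_pmf p) + (\<integral>\<^sup>+x. f x \<partial>measure_pmf p)"
    by (rule nn_integral_add) auto
  also have "(\<integral>\<^sup>+x. c \<partial>measure_pmf p) = c" by (simp add: measure_pmf.emeasure_space_1)
  also have "c + (\<integral>\<^sup>+x. f x \<partial>measure_pmf p) \<le> c + a" using assms(2) by (rule add_left_mono)
  finally show ?thesis .
qed

lemma support_nodes:
  "strict_poset_on S gt \<Longrightarrow> finite S \<Longrightarrow> t \<in> set_pmf (random_tst_fuel k gt S) \<Longrightarrow> internal_nodes t \<le> card S"
proof (induction k arbitrary: S t)
  case 0
  then show ?case by simp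
next
  case (Suc k)
  show ?case
  proof (cases "S = {}")
    case True
    then show ?thesis using Suc.prems by simp
  next
    case False
    let ?L = "\<lambda>x. {u\<in>S. gt x u}" and ?M = "\<lambda>x. {u\<in>S. u \<noteq> x \<and> incomparable gt x u}" and ?R = "\<lambda>x. {u\<in>S. gt u x}"
    from Suc.prems(3) False Suc.prems(2) obtain x l m r where
      x: "x \<in> S" and l: "l \<in> set_pmf (random_tst_fuel k gt (?L x))"
      and m: "m \<in> set_pmf (random_tst_fuel k gt (?M x))"
      and r: "r \<in> set_pmf (random_tst_fuel k gt (?R x))" and t: "t = Node l x m r"
      by auto
    have "internal_nodes l \<le> card (?L x)"
      by (rule Suc.IH[OF strict_poset_on_subset[OF Suc.prems(1)] _ l]) (use Suc.prems(2) in auto)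
    moreover have "internal_nodes m \<le> card (?M x)"
      by (rule Suc.IH[OF strict_poset_on_subset[OF Suc.prems(1)] _ m]) (use Suc.prems(2) in auto)
    moreover have "internal_nodes r \<le> card (?R x)"
      by (rule Suc.IH[OF strict_poset_on_subset[OF Suc.prems(1)] _ r]) (use Suc.prems(2) in auto)
    moreover have "card S \<ge> 1" using x Suc.prems(2) by (metis One_nat_def Suc_leI card_gt_0_iff empty_iff)
    ultimately show ?thesis using card_parts[OF Suc.prems(1,2) x] t by simp
  qed
qed

lemma main:
  "strict_poset_on S gt \<Longrightarrow> finite S \<Longrightarrow>
   (\<integral>\<^sup>+t. ennreal (real (tree_weight t)) \<partial>measure_pmf (random_tst_fuel k gt S))
     \<le> ennreal (\<Sum>y\<in>S. gfun gt S y)"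
proof (induction k arbitrary: S)
  case 0
  then show ?case by simp
next
  case (Suc k)
  show ?case
  proof (cases "S = {}")
    case True
    then show ?thesis by simp
  next
    case False
    let ?L = "\<lambda>x. {u\<in>S. gt x u}" and ?M = "\<lambda>x. {u\<in>S. u \<noteq> x \<and> incomparable gt x u}" and ?R = "\<lambda>x. {u\<in>S. gt u x}"
    define W where "W t = ennreal (real (tree_weight t))" for t :: "'a ttree"
    define F where "F x = real (card S - 1) + (\<Sum>y\<in>?L x. gfun gt (?L x) y)
       + (\<Sum>y\<in>?M x. gfun gt (?M x) y) + (\<Sum>y\<in>?R x. gfun gt (?R x) y)" for x
    have po: "\<And>T. T \<subseteq> S \<Longrightarrow> strict_poset_on T gt" using strict_poset_on_subset[OF Suc.prems(1)] by blast
    have fs: "\<And>T. T \<subseteq> S \<Longrightarrow> finite T" using Suc.prems(2) finite_subset by blast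
    have IH: "\<And>T. T \<subseteq> S \<Longrightarrow> (\<integral>\<^sup>+t. W t \<partial>measure_pmf (random_tst_fuel k gt T)) \<le> ennreal (\<Sum>y\<in>T. gfun gt T y)"
      unfolding W_def using Suc.IH po fs by blast
    have sup: "\<And>T t. T \<subseteq> S \<Longrightarrow> t \<in> set_pmf (random_tst_fuel k gt T) \<Longrightarrow> internal_nodes t \<le> card T"
      using support_nodes po fs by blast
    have eq: "random_tst_fuel (Suc k) gt S = pmf_of_set S \<bind> (\<lambda>x. random_tst_fuel k gt (?L x) \<bind>
        (\<lambda>l. random_tst_fuel k gt (?M x) \<bind> (\<lambda>m. random_tst_fuel k gt (?R x) \<bind>
        (\<lambda>r. return_pmf (Node l x m r)))))"
      using False by simp
    have inner: "(\<integral>\<^sup>+l. \<integral>\<^sup>+m. \<integral>\<^sup>+r. W (Node l x m r) \<partial>measure_pmf (random_tst_fuel k gt (?R x))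
        \<partial>measure_pmf (random_tst_fuel k gt (?M x)) \<partial>measure_pmf (random_tst_fuel k gt (?L x)))
        \<le> ennreal (F x)" if xS: "x \<in> S" for x
    proof -
      define c0 where "c0 = ennreal (real (card S - 1))"
      define BL where "BL = ennreal (\<Sum>y\<in>?L x. gfun gt (?L x) y)"
      define BM where "BM = ennreal (\<Sum>y\<in>?M x. gfun gt (?M x) y)"
      define BR where "BR = ennreal (\<Sum>y\<in>?R x. gfun gt (?R x) y)"
      have cp: "card (?L x) + card (?M x) + card (?R x) = card S - 1" by (rule card_parts[OF Suc.prems(1,2) xS])
      have "(\<integral>\<^sup>+l. \<integral>\<^sup>+m. \<integral>\<^sup>+r. W (Node l x m r) \<partial>measure_pmf (random_tst_fuel k gt (?R x))
        \<partial>measure_pmf (random_tst_fuel k gt (?M x)) \<partial>measure_pmf (random_tst_fuel k gt (?L x)))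
        \<le> (c0 + BM + BR) + BL"
      proof (rule nn_step[where f = W])
        show "(\<integral>\<^sup>+l. W l \<partial>measure_pmf (random_tst_fuel k gt (?L x))) \<le> BL" unfolding BL_def by (rule IH) auto
        fix l assume l: "l \<in> set_pmf (random_tst_fuel k gt (?L x))"
        have "(\<integral>\<^sup>+m. \<integral>\<^sup>+r. W (Node l x m r) \<partial>measure_pmf (random_tst_fuel k gt (?R x))
           \<partial>measure_pmf (random_tst_fuel k gt (?M x))) \<le> (c0 + W l + BR) + BM"
        proof (rule nn_step[where f = W])
          show "(\<integral>\<^sup>+m. W m \<partial>measure_pmf (random_tst_fuel k gt (?M x))) \<le> BM" unfolding BM_def by (rule IH) auto
          fix m assume m: "m \<in> set_pmf (random_tst_fuel k gt (?M x))"
          have "(\<integral>\<^sup>+r. W (Node l x m r) \<partial>measure_pmf (random_tst_fuel k gt (?R x))) \<le> (c0 + W l + W m) + BR"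
          proof (rule nn_step[where f = W])
            show "(\<integral>\<^sup>+r. W r \<partial>measure_pmf (random_tst_fuel k gt (?R x))) \<le> BR" unfolding BR_def by (rule IH) auto
            fix r assume r: "r \<in> set_pmf (random_tst_fuel k gt (?R x))"
            have n1: "internal_nodes l \<le> card (?L x)" by (rule sup[OF _ l]) auto
            have n2: "internal_nodes m \<le> card (?M x)" by (rule sup[OF _ m]) auto
            have n3: "internal_nodes r \<le> card (?R x)" by (rule sup[OF _ r]) auto
            have "tree_weight (Node l x m r) \<le> (card S - 1) + tree_weight l + tree_weight m + tree_weight r"
              using n1 n2 n3 cp by simp
            then have "real (tree_weight (Node l x m r)) \<le> real (card S - 1) + real (tree_weight l) + real (tree_weight m) + real (tree_weight r)"
              by linarith
            then have "ennreal (real (tree_weight (Node l x m r))) \<le> ennreal (real (card S - 1) + real (tree_weight l) + real (tree_weight m) + real (tree_weight r))"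
              by (rule ennreal_leI)
            then show "W (Node l x m r) \<le> c0 + W l + W m + W r"
              unfolding W_def c0_def by (simp add: ennreal_plus)
          qed
          then show "(\<integral>\<^sup>+r. W (Node l x m r) \<partial>measure_pmf (random_tst_fuel k gt (?R x))) \<le> (c0 + W l + BR) + W m"
            by (simp add: ac_simps)
        qed
        then show "(\<integral>\<^sup>+m. \<integral>\<^sup>+r. W (Node l x m r) \<partial>measure_pmf (random_tst_fuel k gt (?R x))
           \<partial>measure_pmf (random_tst_fuel k gt (?M x))) \<le> (c0 + BM + BR) + W l"
          by (simp add: ac_simps)
      qed
      also have "(c0 + BM + BR) + BL = ennreal (F x)"
        unfolding c0_def BM_def BR_def BL_def F_def
        by (simp add: ennreal_plus[symmetric] sum_nonneg gfun_nonneg ac_simps del: ennreal_plus)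
      finally show ?thesis .
    qed
    have "(\<integral>\<^sup>+t. ennreal (real (tree_weight t)) \<partial>measure_pmf (random_tst_fuel (Suc k) gt S))
       = (\<integral>\<^sup>+x. (\<integral>\<^sup>+l. \<integral>\<^sup>+m. \<integral>\<^sup>+r. W (Node l x m r) \<partial>measure_pmf (random_tst_fuel k gt (?R x))
        \<partial>measure_pmf (random_tst_fuel k gt (?M x)) \<partial>measure_pmf (random_tst_fuel k gt (?L x))) \<partial>measure_pmf (pmf_of_set S))"
      unfolding eq W_def by simp
    also have "\<dots> \<le> (\<integral>\<^sup>+x. ennreal (F x) \<partial>measure_pmf (pmf_of_set S))"
      by (rule nn_integral_mono_AE) (use inner False Suc.prems(2) in \<open>auto simp: AE_measure_pmf_iff\<close>)
    also have "\<dots> = (\<Sum>x\<in>S. ennreal (F x)) / of_nat (card S)"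
      using False Suc.prems(2) by (simp add: nn_integral_pmf_of_set)
    also have "\<dots> = ennreal ((\<Sum>x\<in>S. F x) / real (card S))"
    proof -
      have "\<And>x. x \<in> S \<Longrightarrow> F x \<ge> 0" unfolding F_def by (intro add_nonneg_nonneg sum_nonneg gfun_nonneg) auto
      then have "(\<Sum>x\<in>S. ennreal (F x)) = ennreal (\<Sum>x\<in>S. F x)" by simp
      moreover have "card S > 0" using False Suc.prems(2) by (simp add: card_gt_0_iff)
      ultimately show ?thesis
        using \<open>\<And>x. x \<in> S \<Longrightarrow> F x \<ge> 0\<close>
        by (simp add: ennreal_of_nat_eq_real_of_nat divide_ennreal sum_nonneg)
    qed
    also have "\<dots> \<le> ennreal (\<Sum>y\<in>S. gfun gt S y)"
    proof (rule ennreal_leI)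
      have "(\<Sum>x\<in>S. F x) = (\<Sum>x\<in>S. \<Sum>y\<in>S-{x}. 1 + gfun gt (child gt S x y) y)"
        unfolding F_def by (intro sum.cong refl F_rewrite[OF Suc.prems(1,2)])
      also have "\<dots> \<le> real (card S) * (\<Sum>y\<in>S. gfun gt S y)" by (rule total_bound[OF Suc.prems(1,2)])
      finally have "(\<Sum>x\<in>S. F x) \<le> real (card S) * (\<Sum>y\<in>S. gfun gt S y)" .
      moreover have "card S > 0" using False Suc.prems(2) by (simp add: card_gt_0_iff)
      ultimately show "(\<Sum>x\<in>S. F x) / real (card S) \<le> (\<Sum>y\<in>S. gfun gt S y)"
        by (simp add: divide_le_eq mult.commute)
    qed
    finally show ?thesis .
  qed
qed




lemma gfun_le:
  assumes fin: "finite P" and po: "strict_poset_on P gt" and yP: "y \<in> P"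
  shows "gfun gt P y \<le> 2 * (log 2 (real (card P)) + real (poset_width P gt))"
proof -
  have irr: "\<not> gt y y" using po yP unfolding strict_poset_on_def by blast
  have n1: "card P \<ge> 1" using fin yP by (metis One_nat_def Suc_leI card_gt_0_iff empty_iff)
  have "card {u\<in>P. gt u y} \<le> card (P - {y})" by (rule card_mono) (use fin irr in auto)
  then have c1: "real (card {u\<in>P. gt u y}) + 1 \<le> real (card P)" using fin yP n1 by simp
  have "card {u\<in>P. gt y u} \<le> card (P - {y})" by (rule card_mono) (use fin irr in auto)
  then have c2: "real (card {u\<in>P. gt y u}) + 1 \<le> real (card P)" using fin yP n1 by simp
  have l1: "log 2 (real (card {u\<in>P. gt u y}) + 1) \<le> log 2 (real (card P))"
    using c1 by (subst log_le_cancel_iff) auto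
  have l2: "log 2 (real (card {u\<in>P. gt y u}) + 1) \<le> log 2 (real (card P))"
    using c2 by (subst log_le_cancel_iff) auto
  have "log 2 (real (card P)) \<ge> 0" using n1 by simp
  then show ?thesis unfolding gfun_def using l1 l2 by simp
qed

theorem theorem15:
  "\<exists>C>0. \<forall>(P :: nat set) (gt :: nat \<Rightarrow> nat \<Rightarrow> bool).
     finite P \<longrightarrow> strict_poset_on P gt \<longrightarrow>
     measure_pmf.expectation (random_tst gt P) (\<lambda>t. real (tree_weight t))
       \<le> C * real (card P) * (log 2 (real (card P)) + real (poset_width P gt))"
proof (intro exI[of _ 2] conjI allI impI)
  show "(0::real) < 2" by simp
  fix P :: "nat set" and gt :: "nat \<Rightarrow> nat \<Rightarrow> bool"
  assume fin: "finite P" and po: "strict_poset_on P gt"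
  define r where "r = 2 * real (card P) * (log 2 (real (card P)) + real (poset_width P gt))"
  have sb: "(\<Sum>y\<in>P. gfun gt P y) \<le> r"
  proof -
    have "(\<Sum>y\<in>P. gfun gt P y) \<le> (\<Sum>y\<in>P. 2 * (log 2 (real (card P)) + real (poset_width P gt)))"
      by (intro sum_mono gfun_le[OF fin po])
    then show ?thesis unfolding r_def by (simp add: algebra_simps)
  qed
  have r0: "0 \<le> r" using sb by (meson order_trans sum_nonneg gfun_nonneg)
  have "(\<integral>\<^sup>+t. ennreal (real (tree_weight t)) \<partial>measure_pmf (random_tst gt P)) \<le> ennreal (\<Sum>y\<in>P. gfun gt P y)"
    unfolding random_tst_def by (rule main[OF po fin])
  also have "\<dots> \<le> ennreal r" using sb by (rule ennreal_leI)
  finally have "measure_pmf.expectation (random_tst gt P) (\<lambda>t. real (tree_weight t)) \<le> r"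
    by (intro integral_real_bounded r0)
  then show "measure_pmf.expectation (random_tst gt P) (\<lambda>t. real (tree_weight t))
       \<le> 2 * real (card P) * (log 2 (real (card P)) + real (poset_width P gt))" unfolding r_def .
qed


end
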